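(* Let $G$ be a finite group such that the identity element is the only vertex of the power graph $\mathscr{G}(G)$ adjacent to all other vertices. Then $\mathscr{G}(G)$ is not overfull.
   Context: For a finite group $G$, the power graph $\mathscr{G}(G)$ is the simple graph with vertex set the elements of $G$, in which two distinct elements $a,b$ are adjacent if and only if one is a power of the other. For a finite simple graph $\Gamma$ on $n$ vertices with maximum vertex degree $\Delta(\Gamma)$, $\Gamma$ is called overfull if $|E(\Gamma)| / \lfloor n/2 \rfloor > \Delta(\Gamma)$. *)

theory Defs
  imports Complex_Main "HOL-Algebra.Group"
begin

text \<open>Adjacency in the power graph: distinct elements, one a (natural) power of the other.
  In a finite group, integer powers coincide with natural powers.\<close>
definition pg_adj :: "('a, 'b) monoid_scheme \<Rightarrow> 'a \<Rightarrow> 'a \<Rightarrow> bool" where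
  "pg_adj G a b \<longleftrightarrow> a \<in> carrier G \<and> b \<in> carrier G \<and> a \<noteq> b \<and>
     ((\<exists>k::nat. a = b [^]\<^bsub>G\<^esub> k) \<or> (\<exists>k::nat. b = a [^]\<^bsub>G\<^esub> k))"

definition pg_edges :: "('a, 'b) monoid_scheme \<Rightarrow> 'a set set" where
  "pg_edges G = {{a, b} | a b. pg_adj G a b}"

definition pg_degree :: "('a, 'b) monoid_scheme \<Rightarrow> 'a \<Rightarrow> nat" where
  "pg_degree G v = card {w \<in> carrier G. pg_adj G v w}"

definition pg_max_degree :: "('a, 'b) monoid_scheme \<Rightarrow> nat" where
  "pg_max_degree G = Max (pg_degree G ` carrier G)"

definition pg_overfull :: "('a, 'b) monoid_scheme \<Rightarrow> bool" where
  "pg_overfull G \<longleftrightarrow>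
     real (card (pg_edges G)) / real (card (carrier G) div 2) > real (pg_max_degree G)"

definition pg_dominating :: "('a, 'b) monoid_scheme \<Rightarrow> 'a set" where
  "pg_dominating G = {v \<in> carrier G. \<forall>w \<in> carrier G. w \<noteq> v \<longrightarrow> pg_adj G v w}"

end

theory Submission
  imports Defs
begin

lemma pairs_card:
  fixes G :: "('a, 'b) monoid_scheme"
  assumes fin: "finite (carrier G)"
  shows "card {(a,b). pg_adj G a b} = 2 * card (pg_edges G)"
proof -
  let ?P = "{(a,b). pg_adj G a b}"
  have sym: "pg_adj G a b \<Longrightarrow> pg_adj G b a" for a b
    unfolding pg_adj_def by auto
  have finE: "finite (pg_edges G)"
  proof -
    have "pg_edges G \<subseteq> Pow (carrier G)" unfolding pg_edges_def pg_adj_def by auto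
    then show ?thesis using fin finite_subset by blast
  qed
  have eq: "?P = (\<Union>e\<in>pg_edges G. {(a,b). {a,b} = e \<and> a \<noteq> b})"
  proof -
    have 1: "pg_adj G a b \<Longrightarrow> a \<noteq> b" for a b unfolding pg_adj_def by blast
    have 2: "pg_adj G x y" if "x \<noteq> y" "{x,y} = {a,b}" "pg_adj G a b" for x y a b
    proof -
      have "(x = a \<and> y = b) \<or> (x = b \<and> y = a)" using that(2) by (simp add: doubleton_eq_iff)
      then show ?thesis using that(3) sym by blast
    qed
    show ?thesis unfolding pg_edges_def
    proof (rule equalityI)
      show "?P \<subseteq> (\<Union>e\<in>{{a, b} |a b. pg_adj G a b}. {(a,b). {a,b} = e \<and> a \<noteq> b})"
      proof
      fix p assume "p \<in> ?P"
      then obtain a b where p: "p = (a,b)" "pg_adj G a b" by blast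
      then have "{a,b} \<in> {{a, b} |a b. pg_adj G a b}" by blast
      then show "p \<in> (\<Union>e\<in>{{a, b} |a b. pg_adj G a b}. {(a,b). {a,b} = e \<and> a \<noteq> b})"
        using p 1 by blast
      qed
    next
      show "(\<Union>e\<in>{{a, b} |a b. pg_adj G a b}. {(a,b). {a,b} = e \<and> a \<noteq> b}) \<subseteq> ?P"
      proof
      fix p assume "p \<in> (\<Union>e\<in>{{a, b} |a b. pg_adj G a b}. {(a,b). {a,b} = e \<and> a \<noteq> b})"
      then obtain x y a b where "p = (x,y)" "x \<noteq> y" "{x,y} = {a,b}" "pg_adj G a b" by blast
      then show "p \<in> ?P" using 2 by blast
      qed
    qed
  qed
  have piece: "card {(a,b). {a,b} = e \<and> a \<noteq> b} = 2" if eE: "e \<in> pg_edges G" for e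
  proof -
    obtain x y where e: "e = {x,y}" "x \<noteq> y"
    proof -
      from eE obtain a b where "e = {a,b}" "pg_adj G a b" unfolding pg_edges_def by blast
      moreover then have "a \<noteq> b" unfolding pg_adj_def by blast
      ultimately show ?thesis using that by blast
    qed
    have "{(a,b). {a,b} = e \<and> a \<noteq> b} = {(x,y),(y,x)}"
      using e by (auto simp: doubleton_eq_iff)
    then show ?thesis using e by simp
  qed
  have fp: "finite {(a,b). {a,b} = e \<and> a \<noteq> b}" if "e \<in> pg_edges G" for e
    proof (rule ccontr)
    assume "infinite {(a,b). {a,b} = e \<and> a \<noteq> b}"
    then have "card {(a,b). {a,b} = e \<and> a \<noteq> b} = 0" by (rule card.infinite)
    then show False using piece[OF that] by simp
  qed
  have "card ?P = (\<Sum>e\<in>pg_edges G. card {(a,b). {a,b} = e \<and> a \<noteq> b})"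
    unfolding eq
    apply (rule card_UN_disjoint[OF finE])
    using fp apply blast
    by auto
  also have "\<dots> = (\<Sum>e\<in>pg_edges G. 2)" using piece by simp
  finally show ?thesis by simp
qed

lemma pairs_sum:
  fixes G :: "('a, 'b) monoid_scheme"
  assumes fin: "finite (carrier G)"
  shows "card {(a,b). pg_adj G a b} = (\<Sum>v\<in>carrier G. pg_degree G v)"
proof -
  have "{(a,b). pg_adj G a b} = Sigma (carrier G) (\<lambda>v. {w \<in> carrier G. pg_adj G v w})"
    unfolding pg_adj_def by auto
  then show ?thesis unfolding pg_degree_def
    using card_SigmaI[OF fin] fin by simp
qed

theorem mainTheorem5:
  fixes G :: "('a, 'b) monoid_scheme"
  assumes "group G"
    and "finite (carrier G)"
    and "pg_dominating G = {\<one>\<^bsub>G\<^esub>}"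
  shows "\<not> pg_overfull G"
proof -
  let ?n = "card (carrier G)"
  let ?e = "card (pg_edges G)"
  let ?k = "?n div 2"
  have fin: "finite (carrier G)" by fact
  have one: "\<one>\<^bsub>G\<^esub> \<in> carrier G" using assms(1) group.is_monoid monoid.one_closed by blast
  have n1: "?n \<ge> 1" using one fin card_0_eq by fastforce
  have degle: "pg_degree G v \<le> ?n - 1" if "v \<in> carrier G" for v
  proof -
    have "{w \<in> carrier G. pg_adj G v w} \<subseteq> carrier G - {v}" unfolding pg_adj_def by auto
    then have "pg_degree G v \<le> card (carrier G - {v})" unfolding pg_degree_def
      using fin by (simp add: card_mono)
    then show ?thesis using that fin by simp
  qed
  have degle2: "pg_degree G v \<le> ?n - 2" if vc: "v \<in> carrier G" "v \<noteq> \<one>\<^bsub>G\<^esub>" for v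
  proof -
    have "v \<notin> pg_dominating G" using assms(3) that by auto
    then obtain w where w: "w \<in> carrier G" "w \<noteq> v" "\<not> pg_adj G v w"
      using vc(1) unfolding pg_dominating_def by blast
    have "{w \<in> carrier G. pg_adj G v w} \<subseteq> carrier G - {v, w}" using w unfolding pg_adj_def by auto
    then have "pg_degree G v \<le> card (carrier G - {v, w})" unfolding pg_degree_def
      using fin by (simp add: card_mono)
    also have "\<dots> = ?n - 2" using that w fin by (simp add: card_Diff_subset)
    finally show ?thesis .
  qed
  have deg1: "pg_degree G \<one>\<^bsub>G\<^esub> = ?n - 1"
  proof -
    have "{w \<in> carrier G. pg_adj G \<one>\<^bsub>G\<^esub> w} = carrier G - {\<one>\<^bsub>G\<^esub>}"
      using assms(3) unfolding pg_dominating_def by (auto simp: pg_adj_def)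
    then show ?thesis unfolding pg_degree_def using one fin by simp
  qed
  have maxge: "pg_max_degree G \<ge> ?n - 1"
  proof -
    have "pg_degree G \<one>\<^bsub>G\<^esub> \<in> pg_degree G ` carrier G" using one by blast
    then have "pg_degree G \<one>\<^bsub>G\<^esub> \<le> Max (pg_degree G ` carrier G)"
      using fin by (intro Max_ge) auto
    then show ?thesis unfolding pg_max_degree_def using deg1 by simp
  qed
  have "2 * ?e = (\<Sum>v\<in>carrier G. pg_degree G v)"
    using pairs_card[OF fin] pairs_sum[OF fin] by simp
  also have "\<dots> = pg_degree G \<one>\<^bsub>G\<^esub> + (\<Sum>v\<in>carrier G - {\<one>\<^bsub>G\<^esub>}. pg_degree G v)"
    using one fin by (simp add: sum.remove)
  also have "\<dots> \<le> (?n - 1) + (\<Sum>v\<in>carrier G - {\<one>\<^bsub>G\<^esub>}. ?n - 2)"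
    using deg1 degle2 by (intro add_mono sum_mono) auto
  also have "\<dots> = (?n - 1) + (?n - 1) * (?n - 2)" using one fin by simp
  also have "\<dots> = (?n - 1) * (?n - 1)" 
  proof -
    obtain m where m: "?n = Suc m" using n1 by (cases "card (carrier G)") auto
    show ?thesis unfolding m by (cases m) simp_all
  qed
  also have "\<dots> \<le> (?n - 1) * (2 * ?k)" by (intro mult_le_mono2) auto
  finally have A: "?e \<le> (?n - 1) * ?k" by simp
  show ?thesis
  proof (cases "?k = 0")
    case True
    then show ?thesis unfolding pg_overfull_def by simp
  next
    case False
    have "?e \<le> pg_max_degree G * ?k" using A maxge
      by (meson le_trans mult_le_mono1)
    then have "real ?e \<le> real (pg_max_degree G) * real ?k" by (metis of_nat_le_iff of_nat_mult)
    then show ?thesis unfolding pg_overfull_def using False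
      by (simp add: divide_le_eq not_less)
  qed
qed

end
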